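(* Let $\boldsymbol{\xi}^1,\dots,\boldsymbol{\xi}^K\in\mathcal X=[0,1/\sqrt{D}]^D$, $\beta>0$, and $E(\mathbf{x}) = -\frac{1}{\beta}\log\Big(\sum_{\mu=1}^K \exp\big(-\tfrac{\beta}{2}\|\boldsymbol{\xi}^\mu-\mathbf{x}\|_2^2\big)\Big).$ Then for all $\mathbf{x},\mathbf{z}\in\mathcal X$, $\|\nabla_{\mathbf{x}}E(\mathbf{x})-\nabla_{\mathbf{x}}E(\mathbf{z})\|_2\le(1+2K\beta e^{\beta/2})\|\mathbf{x}-\mathbf{z}\|_2.$
   Context: Here $\nabla_{\mathbf{x}}E(\mathbf{x}) = \mathbf{x}-\sum_{\mu=1}^K \frac{\exp(-\frac{\beta}{2}\|\mathbf{x}-\boldsymbol{\xi}^\mu\|_2^2)}{\sum_{\nu=1}^K\exp(-\frac{\beta}{2}\|\mathbf{x}-\boldsymbol{\xi}^\nu\|_2^2)}\boldsymbol{\xi}^\mu$ is the gradient of $E$. *)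

theory Defs
  imports "HOL-Analysis.Analysis"
begin

definition hcube :: "(real ^ 'n) set" where
  "hcube = {x. \<forall>i. 0 \<le> x $ i \<and> x $ i \<le> 1 / sqrt (real CARD('n))}"

definition energy :: "real \<Rightarrow> nat \<Rightarrow> (nat \<Rightarrow> real ^ 'n) \<Rightarrow> real ^ 'n \<Rightarrow> real" where
  "energy \<beta> K \<xi> x = - (1 / \<beta>) * ln (\<Sum>\<mu>=1..K. exp (- (\<beta> / 2) * (norm (\<xi> \<mu> - x))\<^sup>2))"

text \<open>The gradient of E, exactly as given in the paper:
  x - sum_mu softmax_mu(x) xi^mu.\<close>
definition gradE :: "real \<Rightarrow> nat \<Rightarrow> (nat \<Rightarrow> real ^ 'n) \<Rightarrow> real ^ 'n \<Rightarrow> real ^ 'n" where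
  "gradE \<beta> K \<xi> x = x - (\<Sum>\<mu>=1..K.
      (exp (- (\<beta> / 2) * (norm (x - \<xi> \<mu>))\<^sup>2)
        / (\<Sum>\<nu>=1..K. exp (- (\<beta> / 2) * (norm (x - \<xi> \<nu>))\<^sup>2))) *\<^sub>R \<xi> \<mu>)"

end

theory Submission
  imports Defs
begin

lemma hcube_dist:
  assumes "x \<in> hcube" "y \<in> hcube"
  shows "norm (x - y :: real ^ 'n) \<le> 1"
proof -
  let ?c = "1 / sqrt (real CARD('n))"
  have c2: "?c ^ 2 = 1 / real CARD('n)"
    by (simp add: power_divide)
  have "\<And>i. (x$i - y$i)^2 \<le> ?c^2"
  proof -
    fix i
    have "0 \<le> x$i" "x$i \<le> ?c" "0 \<le> y$i" "y$i \<le> ?c" using assms unfolding hcube_def by auto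
    then have "\<bar>x$i - y$i\<bar> \<le> ?c" by linarith
    then show "(x$i - y$i)^2 \<le> ?c^2"
      by (metis abs_ge_zero power2_abs power_mono)
  qed
  then have "(\<Sum>i\<in>UNIV. (x$i - y$i)^2) \<le> (\<Sum>i\<in>(UNIV::'n set). ?c^2)"
    by (rule sum_mono)
  also have "\<dots> = 1" using c2 by simp
  finally have "(norm (x - y))^2 \<le> 1"
    by (simp add: norm_vec_def L2_set_def real_norm_def sum_nonneg)
  then show ?thesis
    by (metis abs_le_square_iff abs_norm_cancel abs_one one_power2)
qed

lemma exp_lip:
  fixes u v :: real
  assumes "u \<le> 0" "v \<le> 0"
  shows "\<bar>exp u - exp v\<bar> \<le> \<bar>u - v\<bar>"
proof -
  have key: "\<And>u v::real. u \<le> 0 \<Longrightarrow> v \<le> u \<Longrightarrow> exp u - exp v \<le> u - v"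
  proof -
    fix u v :: real assume h: "u \<le> 0" "v \<le> u"
    have "exp u - exp v = exp u * (1 - exp (v - u))" by (simp add: exp_diff field_simps)
    also have "\<dots> \<le> 1 * (u - v)"
    proof (rule mult_mono)
      show "exp u \<le> 1" using h by simp
      show "1 - exp (v - u) \<le> u - v" using exp_ge_add_one_self[of "v - u"] by linarith
      show "0 \<le> (1::real)" by simp
      show "0 \<le> 1 - exp (v - u)" using h by simp
    qed
    finally show "exp u - exp v \<le> u - v" by simp
  qed
  show ?thesis
  proof (cases "v \<le> u")
    case True
    then show ?thesis using key[of u v] assms by auto
  next
    case False
    then show ?thesis using key[of v u] assms by auto
  qed
qed

lemma gauss_lip:
  fixes x z y :: "real ^ 'n"
  assumes "\<beta> > 0" "norm (x - y) \<le> 1" "norm (z - y) \<le> 1"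
  shows "\<bar>exp (- (\<beta> / 2) * (norm (x - y))\<^sup>2) - exp (- (\<beta> / 2) * (norm (z - y))\<^sup>2)\<bar>
          \<le> \<beta> * norm (x - z)"
proof -
  let ?p = "norm (x - y)" and ?q = "norm (z - y)"
  have d: "\<bar>?p - ?q\<bar> \<le> norm (x - z)"
    using norm_triangle_ineq3[of "x - y" "z - y"] by (simp add: algebra_simps)
  have "?p\<^sup>2 - ?q\<^sup>2 = (?p - ?q) * (?p + ?q)"
    by (simp add: power2_eq_square algebra_simps)
  then have "\<bar>?p\<^sup>2 - ?q\<^sup>2\<bar> = \<bar>?p - ?q\<bar> * (?p + ?q)"
    by (simp add: abs_mult)
  also have "\<dots> \<le> norm (x - z) * 2"
    using d assms by (intro mult_mono) auto
  finally have e: "\<bar>?p\<^sup>2 - ?q\<^sup>2\<bar> \<le> norm (x - z) * 2" .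
  have "\<bar>exp (- (\<beta> / 2) * ?p\<^sup>2) - exp (- (\<beta> / 2) * ?q\<^sup>2)\<bar>
        \<le> \<bar>- (\<beta> / 2) * ?p\<^sup>2 - - (\<beta> / 2) * ?q\<^sup>2\<bar>"
    using assms by (intro exp_lip) auto
  also have "\<dots> = (\<beta> / 2) * \<bar>?p\<^sup>2 - ?q\<^sup>2\<bar>"
  proof -
    have "- (\<beta> / 2) * ?p\<^sup>2 - - (\<beta> / 2) * ?q\<^sup>2 = (\<beta> / 2) * (?q\<^sup>2 - ?p\<^sup>2)"
      by (simp add: algebra_simps)
    then have "\<bar>- (\<beta> / 2) * ?p\<^sup>2 - - (\<beta> / 2) * ?q\<^sup>2\<bar> = \<bar>\<beta> / 2\<bar> * \<bar>?q\<^sup>2 - ?p\<^sup>2\<bar>"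
      by (simp only: abs_mult)
    then show ?thesis using assms by (simp add: abs_minus_commute)
  qed
  also have "\<dots> \<le> (\<beta> / 2) * (norm (x - z) * 2)"
    using e assms by (intro mult_left_mono) auto
  finally show ?thesis by simp
qed

theorem lemma2:
  fixes \<xi> :: "nat \<Rightarrow> real ^ 'n" and K :: nat and \<beta> :: real and x z :: "real ^ 'n"
  assumes "\<forall>\<mu>\<in>{1..K}. \<xi> \<mu> \<in> hcube"
    and "\<beta> > 0"
    and "x \<in> hcube" and "z \<in> hcube"
  shows "norm (gradE \<beta> K \<xi> x - gradE \<beta> K \<xi> z)
           \<le> (1 + 2 * real K * \<beta> * exp (\<beta> / 2)) * norm (x - z)"
proof -
  define A where "A \<mu> = exp (- (\<beta> / 2) * (norm (x - \<xi> \<mu>))\<^sup>2)" for \<mu>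
  define B where "B \<mu> = exp (- (\<beta> / 2) * (norm (z - \<xi> \<mu>))\<^sup>2)" for \<mu>
  define SA where "SA = (\<Sum>\<nu>=1..K. A \<nu>)"
  define SB where "SB = (\<Sum>\<nu>=1..K. B \<nu>)"
  define d where "d = norm (x - z)"
  define I where "I = {1..K}"
  have fI: "finite I" by (simp add: I_def)
  have zh: "(0::real^'n) \<in> hcube" unfolding hcube_def by simp
  have nxi: "norm (\<xi> \<mu>) \<le> 1" if "\<mu> \<in> I" for \<mu>
    using hcube_dist[of "\<xi> \<mu>" 0] zh assms(1) that I_def by auto
  have Apos: "A \<mu> > 0" "B \<mu> > 0" for \<mu> by (auto simp: A_def B_def)
  have AB: "\<bar>A \<mu> - B \<mu>\<bar> \<le> \<beta> * d" if "\<mu> \<in> I" for \<mu>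
    unfolding A_def B_def d_def
    using gauss_lip[OF assms(2), of x "\<xi> \<mu>" z] hcube_dist[of x "\<xi> \<mu>"] hcube_dist[of z "\<xi> \<mu>"] assms that I_def by auto
  have Alow: "A \<mu> \<ge> exp (- \<beta> / 2)" if "\<mu> \<in> I" for \<mu>
  proof -
    have "norm (x - \<xi> \<mu>) \<le> 1" using hcube_dist[of x "\<xi> \<mu>"] assms that I_def by auto
    then have "(norm (x - \<xi> \<mu>))\<^sup>2 \<le> 1" by (simp add: power_le_one)
    then have "- (\<beta> / 2) * (norm (x - \<xi> \<mu>))\<^sup>2 \<ge> - \<beta> / 2"
      using assms(2) by (simp add: mult_left_mono)
    then show ?thesis unfolding A_def by simp
  qed
  have d0: "d \<ge> 0" by (simp add: d_def)
  have main: "norm (x - z - (gradE \<beta> K \<xi> x - gradE \<beta> K \<xi> z)) \<le> 2 * real K * \<beta> * exp (\<beta> / 2) * d"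
  proof (cases "K = 0")
    case True
    then show ?thesis by (simp add: gradE_def)
  next
    case False
    have SApos: "SA \<ge> real K * exp (- \<beta> / 2)"
    proof -
      have "SA \<ge> (\<Sum>\<nu>\<in>I. exp (- \<beta> / 2))" unfolding SA_def I_def[symmetric]
        using Alow by (intro sum_mono) auto
      then show ?thesis by (simp add: I_def)
    qed
    have SAp: "SA > 0" using SApos False
      by (smt (verit) exp_gt_zero mult_pos_pos of_nat_0_less_iff gr0I)
    have SBp: "SB > 0" unfolding SB_def using False Apos(2)
      by (intro sum_pos) auto
    have eq: "x - z - (gradE \<beta> K \<xi> x - gradE \<beta> K \<xi> z)
            = (\<Sum>\<mu>\<in>I. (A \<mu> / SA - B \<mu> / SB) *\<^sub>R \<xi> \<mu>)"
      unfolding gradE_def A_def[symmetric] B_def[symmetric] SA_def[symmetric] SB_def[symmetric] I_def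
      by (simp add: scaleR_left_diff_distrib sum_subtractf)
    have "norm (\<Sum>\<mu>\<in>I. (A \<mu> / SA - B \<mu> / SB) *\<^sub>R \<xi> \<mu>)
          \<le> (\<Sum>\<mu>\<in>I. norm ((A \<mu> / SA - B \<mu> / SB) *\<^sub>R \<xi> \<mu>))"
      by (rule norm_sum)
    also have "\<dots> \<le> (\<Sum>\<mu>\<in>I. \<bar>A \<mu> / SA - B \<mu> / SB\<bar>)"
    proof (rule sum_mono)
      fix \<mu> assume "\<mu> \<in> I"
      then show "norm ((A \<mu> / SA - B \<mu> / SB) *\<^sub>R \<xi> \<mu>) \<le> \<bar>A \<mu> / SA - B \<mu> / SB\<bar>"
        using nxi[of \<mu>] by (simp add: mult_left_le)
    qed
    also have "\<dots> \<le> (\<Sum>\<mu>\<in>I. \<bar>A \<mu> - B \<mu>\<bar> / SA + B \<mu> * \<bar>SB - SA\<bar> / (SA * SB))"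
    proof (rule sum_mono)
      fix \<mu> assume "\<mu> \<in> I"
      have "A \<mu> / SA - B \<mu> / SB = (A \<mu> - B \<mu>) / SA + B \<mu> * (SB - SA) / (SA * SB)"
        using SAp SBp by (simp add: field_simps)
      also have "\<bar>\<dots>\<bar> \<le> \<bar>(A \<mu> - B \<mu>) / SA\<bar> + \<bar>B \<mu> * (SB - SA) / (SA * SB)\<bar>"
        by (rule abs_triangle_ineq)
      also have "\<dots> = \<bar>A \<mu> - B \<mu>\<bar> / SA + B \<mu> * \<bar>SB - SA\<bar> / (SA * SB)"
        using SAp SBp Apos(2)[of \<mu>] by (simp add: abs_mult abs_divide)
      finally show "\<bar>A \<mu> / SA - B \<mu> / SB\<bar> \<le> \<bar>A \<mu> - B \<mu>\<bar> / SA + B \<mu> * \<bar>SB - SA\<bar> / (SA * SB)" .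
    qed
    also have "\<dots> = (\<Sum>\<mu>\<in>I. \<bar>A \<mu> - B \<mu>\<bar>) / SA + SB * \<bar>SB - SA\<bar> / (SA * SB)"
      by (simp add: sum.distrib sum_divide_distrib[symmetric] sum_distrib_right[symmetric] SB_def I_def)
    also have "\<dots> = ((\<Sum>\<mu>\<in>I. \<bar>A \<mu> - B \<mu>\<bar>) + \<bar>SB - SA\<bar>) / SA"
      using SAp SBp by (simp add: field_simps)
    also have "\<dots> \<le> (2 * (real K * (\<beta> * d))) / SA"
    proof (rule divide_right_mono)
      have s1: "(\<Sum>\<mu>\<in>I. \<bar>A \<mu> - B \<mu>\<bar>) \<le> (\<Sum>\<mu>\<in>I. \<beta> * d)"
        using AB by (intro sum_mono) auto
      have "\<bar>SB - SA\<bar> = \<bar>\<Sum>\<mu>\<in>I. A \<mu> - B \<mu>\<bar>"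
        by (simp add: SA_def SB_def I_def sum_subtractf)
      also have "\<dots> \<le> (\<Sum>\<mu>\<in>I. \<bar>A \<mu> - B \<mu>\<bar>)" by (rule sum_abs)
      finally show "(\<Sum>\<mu>\<in>I. \<bar>A \<mu> - B \<mu>\<bar>) + \<bar>SB - SA\<bar> \<le> 2 * (real K * (\<beta> * d))"
        using s1 by (simp add: I_def)
      show "0 \<le> SA" using SAp by simp
    qed
    also have "\<dots> \<le> (2 * (real K * (\<beta> * d))) / (real K * exp (- \<beta> / 2))"
      using SApos SAp False assms(2) d0
      by (intro divide_left_mono) (auto intro!: mult_pos_pos)
    also have "\<dots> = 2 * \<beta> * d * exp (\<beta> / 2)"
      using False by (simp add: field_simps exp_minus)
    also have "\<dots> \<le> 2 * real K * \<beta> * exp (\<beta> / 2) * d"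
    proof -
      have "1 \<le> real K" using False by simp
      then have "2 * \<beta> * d * exp (\<beta> / 2) * 1 \<le> 2 * \<beta> * d * exp (\<beta> / 2) * real K"
        using assms(2) d0 by (intro mult_left_mono) auto
      then show ?thesis by (simp add: algebra_simps)
    qed
    finally show ?thesis using eq by simp
  qed
  have "norm (gradE \<beta> K \<xi> x - gradE \<beta> K \<xi> z)
        \<le> norm (x - z) + norm (x - z - (gradE \<beta> K \<xi> x - gradE \<beta> K \<xi> z))"
    using norm_triangle_ineq4[of "x - z" "x - z - (gradE \<beta> K \<xi> x - gradE \<beta> K \<xi> z)"]
    by simp
  also have "\<dots> \<le> d + 2 * real K * \<beta> * exp (\<beta> / 2) * d" using main d_def by simp
  finally show ?thesis by (simp add: d_def algebra_simps)
qed

end
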